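(* Let $K\subset\mathbb R^2$ be a convex body with boundary of class $C^2$. Suppose that the identity $$\frac{\sin^3\alpha}{\kappa(s)}=\frac{\sin^3\beta}{\kappa(t)}$$ holds for every chord $[\gamma(s),\gamma(t)]$ in some open set $U$ of chords of $K$ that covers $\partial K$ (every point of $\partial K$ is an endpoint of some chord in $U$). Then $K$ is an ellipse.
   Context: A convex body is a compact convex set with non-empty interior; $\gamma$ is a regular parametrization of $\partial K$ and $\kappa(s)$ is the curvature of $\partial K$ at $\gamma(s)$. For a chord with endpoints $\gamma(s),\gamma(t)$, $\alpha$ is the angle between the chord and the tangent line to $\partial K$ at $\gamma(s)$ and $\beta$ is the angle between the chord and the tangent line to $\partial K$ at $\gamma(t)$. Chords are identified with pairs of boundary points, and "open" refers to this topology. *)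

theory Defs
  imports "HOL-Analysis.Analysis"
begin

text \<open>The plane is modelled as the complex numbers (a 2-dimensional real inner product space).\<close>

definition convex_body :: "complex set \<Rightarrow> bool" where
  "convex_body K \<longleftrightarrow> compact K \<and> convex K \<and> interior K \<noteq> {}"

definition vec_angle :: "complex \<Rightarrow> complex \<Rightarrow> real" where
  "vec_angle u v = arccos ((u \<bullet> v) / (norm u * norm v))"

text \<open>Angle between the lines spanned by two nonzero vectors, in [0, pi/2].\<close>
definition line_angle :: "complex \<Rightarrow> complex \<Rightarrow> real" where
  "line_angle u v = min (vec_angle u v) (pi - vec_angle u v)"

definition d1 :: "(real \<Rightarrow> complex) \<Rightarrow> real \<Rightarrow> complex" where
  "d1 \<gamma> s = vector_derivative \<gamma> (at s)"

definition d2 :: "(real \<Rightarrow> complex) \<Rightarrow> real \<Rightarrow> complex" where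
  "d2 \<gamma> s = vector_derivative (d1 \<gamma>) (at s)"

definition cross2 :: "complex \<Rightarrow> complex \<Rightarrow> real" where
  "cross2 a b = Re a * Im b - Im a * Re b"

definition curvature :: "(real \<Rightarrow> complex) \<Rightarrow> real \<Rightarrow> real" where
  "curvature \<gamma> s = \<bar>cross2 (d1 \<gamma> s) (d2 \<gamma> s)\<bar> / norm (d1 \<gamma> s) ^ 3"

text \<open>\<gamma> is an L-periodic regular C^2 parametrization of the boundary of K
  (simple closed curve: injective on one period).\<close>
definition C2_regular_boundary_param ::
    "complex set \<Rightarrow> (real \<Rightarrow> complex) \<Rightarrow> real \<Rightarrow> bool" where
  "C2_regular_boundary_param K \<gamma> L \<longleftrightarrow>
     L > 0 \<and> (\<forall>s. \<gamma> (s + L) = \<gamma> s) \<and>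
     inj_on \<gamma> {0..<L} \<and> \<gamma> ` {0..<L} = frontier K \<and>
     (\<forall>s. \<gamma> differentiable at s) \<and>
     (\<forall>s. d1 \<gamma> differentiable at s) \<and>
     continuous_on UNIV (d2 \<gamma>) \<and>
     (\<forall>s. d1 \<gamma> s \<noteq> 0)"

definition is_ellipse :: "complex set \<Rightarrow> bool" where
  "is_ellipse K \<longleftrightarrow> (\<exists>c (f::complex \<Rightarrow> complex). linear f \<and> inj f \<and> K = (\<lambda>z. c + f z) ` cball 0 1)"

end

theory Submission
  imports Defs
begin
locale bcurve =
  fixes K :: "complex set" and \<gamma> :: "real \<Rightarrow> complex" and L :: real
  assumes body: "convex_body K" and param: "C2_regular_boundary_param K \<gamma> L"
begin

lemma Lpos: "L > 0" using param by (simp add: C2_regular_boundary_param_def)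
lemma per: "\<gamma> (s + L) = \<gamma> s" using param by (simp add: C2_regular_boundary_param_def)
lemma injL: "inj_on \<gamma> {0..<L}" using param by (simp add: C2_regular_boundary_param_def)
lemma imgL: "\<gamma> ` {0..<L} = frontier K" using param by (simp add: C2_regular_boundary_param_def)
lemma d1nz: "d1 \<gamma> s \<noteq> 0" using param by (simp add: C2_regular_boundary_param_def)
lemma cont_d2: "continuous_on UNIV (d2 \<gamma>)" using param by (simp add: C2_regular_boundary_param_def)

lemma D1: "(\<gamma> has_vector_derivative d1 \<gamma> s) (at s)"
  using param unfolding C2_regular_boundary_param_def d1_def
  by (simp add: vector_derivative_works)
lemma D2: "(d1 \<gamma> has_vector_derivative d2 \<gamma> s) (at s)"
  using param unfolding C2_regular_boundary_param_def d2_def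
  by (simp add: vector_derivative_works)

lemma cont_g: "continuous_on UNIV \<gamma>"
  using D1 by (meson continuous_at_imp_continuous_on has_vector_derivative_continuous)
lemma cont_d1: "continuous_on UNIV (d1 \<gamma>)"
  using D2 by (meson continuous_at_imp_continuous_on has_vector_derivative_continuous)

lemma per_nat: "\<gamma> (s + real n * L) = \<gamma> s"
proof (induction n arbitrary: s)
  case 0 then show ?case by simp
next
  case (Suc n)
  have "\<gamma> (s + real (Suc n) * L) = \<gamma> ((s + real n * L) + L)" by (simp add: algebra_simps)
  also have "\<dots> = \<gamma> s" using per Suc by simp
  finally show ?case .
qed

lemma per_int: "\<gamma> (s + real_of_int k * L) = \<gamma> s"
proof (cases "k \<ge> 0")
  case True
  then obtain n where "k = int n" by (metis nonneg_eq_int)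
  then show ?thesis using per_nat by simp
next
  case False
  then obtain n where n: "k = - int n" by (metis nonpos_int_cases linorder_not_le less_imp_le)
  have "\<gamma> s = \<gamma> ((s - real n * L) + real n * L)" by simp
  also have "\<dots> = \<gamma> (s - real n * L)" by (rule per_nat)
  finally show ?thesis using n by simp
qed

definition red :: "real \<Rightarrow> real" where "red s = s - real_of_int \<lfloor>s / L\<rfloor> * L"

lemma red_range: "red s \<in> {0..<L}"
proof -
  have a: "real_of_int \<lfloor>s / L\<rfloor> \<le> s / L" "s / L < real_of_int \<lfloor>s / L\<rfloor> + 1" by linarith+
  have "real_of_int \<lfloor>s / L\<rfloor> * L \<le> s / L * L"
    using mult_right_mono[OF a(1), of L] Lpos by simp
  moreover have "s / L * L < (real_of_int \<lfloor>s / L\<rfloor> + 1) * L"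
    using mult_strict_right_mono[OF a(2), of L] Lpos by simp
  ultimately have "real_of_int \<lfloor>s / L\<rfloor> * L \<le> s" "s < (real_of_int \<lfloor>s / L\<rfloor> + 1) * L"
    using Lpos by auto
  then show ?thesis unfolding red_def by (auto simp: algebra_simps)
qed

lemma g_red: "\<gamma> (red s) = \<gamma> s"
  using per_int[of "red s" "\<lfloor>s / L\<rfloor>"] by (simp add: red_def)

lemma g_frontier: "\<gamma> s \<in> frontier K"
  using imgL red_range g_red by (metis image_eqI)

lemma closedK: "closed K" using body by (simp add: convex_body_def compact_imp_closed)
lemma convexK: "convex K" using body by (simp add: convex_body_def)
lemma compactK: "compact K" using body by (simp add: convex_body_def)

lemma frontier_sub: "frontier K \<subseteq> K"
  using closedK by (simp add: frontier_subset_closed)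

lemma g_in_K: "\<gamma> s \<in> K" using g_frontier frontier_sub by blast

lemma frontier_g: "p \<in> frontier K \<Longrightarrow> \<exists>s. p = \<gamma> s"
  using imgL by auto

lemma g_neq: assumes "0 < \<bar>t - s\<bar>" "\<bar>t - s\<bar> < L" shows "\<gamma> s \<noteq> \<gamma> t"
proof
  assume eq: "\<gamma> s = \<gamma> t"
  have "\<gamma> (red s) = \<gamma> (red t)" using eq g_red by simp
  then have "red s = red t" using injL red_range by (meson inj_onD)
  then have "t - s = real_of_int (\<lfloor>t / L\<rfloor> - \<lfloor>s / L\<rfloor>) * L"
    unfolding red_def by (simp add: algebra_simps)
  then obtain k :: int where k: "t - s = real_of_int k * L" by blast
  have "k \<noteq> 0" using k assms by auto
  then have "\<bar>real_of_int k\<bar> \<ge> 1" by linarith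
  then have "\<bar>t - s\<bar> \<ge> L" using k Lpos by (simp add: abs_mult)
  then show False using assms by simp
qed

end

lemma cross2_add_right: "cross2 a (b + c) = cross2 a b + cross2 a c" by (simp add: cross2_def algebra_simps)
lemma cross2_diff_right: "cross2 a (b - c) = cross2 a b - cross2 a c" by (simp add: cross2_def algebra_simps)
lemma cross2_add_left: "cross2 (b + c) a = cross2 b a + cross2 c a" by (simp add: cross2_def algebra_simps)
lemma cross2_diff_left: "cross2 (b - c) a = cross2 b a - cross2 c a" by (simp add: cross2_def algebra_simps)
lemma cross2_scaleR_left: "cross2 (r *\<^sub>R b) a = r * cross2 b a" by (simp add: cross2_def algebra_simps)
lemma cross2_scaleR_right: "cross2 a (r *\<^sub>R b) = r * cross2 a b" by (simp add: cross2_def algebra_simps)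
lemma cross2_anti: "cross2 a b = - cross2 b a" by (simp add: cross2_def algebra_simps)
lemma cross2_self[simp]: "cross2 a a = 0" by (simp add: cross2_def algebra_simps)
lemma cross2_minus_right: "cross2 a (- b) = - cross2 a b" by (simp add: cross2_def)

lemma Re_deriv: "(f has_vector_derivative f') F \<Longrightarrow> ((\<lambda>s. Re (f s)) has_real_derivative Re f') F"
  by (rule has_field_derivative_Re)
lemma Im_deriv: "(f has_vector_derivative f') F \<Longrightarrow> ((\<lambda>s. Im (f s)) has_real_derivative Im f') F"
  by (rule has_field_derivative_Im)

lemma inner_deriv:
  fixes f :: "real \<Rightarrow> complex"
  assumes "(f has_vector_derivative f') (at x within S)"
  shows "((\<lambda>s. a \<bullet> f s) has_real_derivative a \<bullet> f') (at x within S)"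
proof -
  have "((\<lambda>s. Re a * Re (f s) + Im a * Im (f s)) has_real_derivative Re a * Re f' + Im a * Im f') (at x within S)"
    using DERIV_add[OF DERIV_cmult[OF Re_deriv[OF assms]] DERIV_cmult[OF Im_deriv[OF assms]]] by simp
  then show ?thesis by (simp add: inner_complex_def)
qed

lemma cross_deriv_at:
  fixes f g :: "real \<Rightarrow> complex"
  assumes "(f has_vector_derivative f') (at x)" "(g has_vector_derivative g') (at x)"
  shows "((\<lambda>s. cross2 (f s) (g s)) has_real_derivative cross2 f' (g x) + cross2 (f x) g') (at x)"
proof -
  have "((\<lambda>s. Re (f s) * Im (g s) - Im (f s) * Re (g s)) has_real_derivative
     (Re f' * Im (g x) + Im g' * Re (f x)) - (Im f' * Re (g x) + Re g' * Im (f x))) (at x)"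
    using DERIV_diff[OF DERIV_mult[OF Re_deriv[OF assms(1)] Im_deriv[OF assms(2)]]
                        DERIV_mult[OF Im_deriv[OF assms(1)] Re_deriv[OF assms(2)]]] by simp
  then show ?thesis unfolding cross2_def by (rule DERIV_cong) (simp add: algebra_simps)
qed

lemma cross_const_deriv:
  fixes g :: "real \<Rightarrow> complex"
  assumes "(g has_vector_derivative g') (at x within S)"
  shows "((\<lambda>s. cross2 a (g s)) has_real_derivative cross2 a g') (at x within S)"
proof -
  have "((\<lambda>s. Re a * Im (g s) - Im a * Re (g s)) has_real_derivative Re a * Im g' - Im a * Re g') (at x within S)"
    using DERIV_diff[OF DERIV_cmult[OF Im_deriv[OF assms]] DERIV_cmult[OF Re_deriv[OF assms]]] by simp
  then show ?thesis by (simp add: cross2_def)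
qed

lemma cross_dot_id:
  fixes u a v :: complex
  assumes "a \<bullet> u = 0"
  shows "cross2 u v * cross2 u a = (a \<bullet> v) * (norm u)^2"
proof -
  have h: "Re a * Re u + Im a * Im u = 0" using assms by (simp add: inner_complex_def)
  have n: "(norm u)^2 = (Re u)^2 + (Im u)^2" by (simp add: cmod_power2)
  have "cross2 u v * cross2 u a - (a \<bullet> v) * (norm u)^2
      = - (Re u * Re v) * (Re a * Re u + Im a * Im u) - (Im u * Im v) * (Re a * Re u + Im a * Im u)"
    unfolding n by (simp add: cross2_def inner_complex_def algebra_simps power2_eq_square)
  then show ?thesis using h by simp
qed

lemma cross_dot_sq: "(cross2 u a)^2 + (u \<bullet> a)^2 = (norm u)^2 * (norm a)^2"
proof -
  have n: "(norm u)^2 = (Re u)^2 + (Im u)^2" "(norm a)^2 = (Re a)^2 + (Im a)^2" by (simp_all add: cmod_power2)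
  show ?thesis unfolding n by (simp add: cross2_def inner_complex_def algebra_simps power2_eq_square)
qed

lemma sign_const:
  fixes G :: "real \<Rightarrow> real"
  assumes "continuous_on UNIV G" "\<And>s. G s \<noteq> 0"
  shows "G s * G 0 > 0"
proof (rule ccontr)
  assume "\<not> G s * G 0 > 0"
  then have "G s * G 0 < 0" using assms(2)[of s] assms(2)[of 0]
    by (metis linorder_neqE_linordered_idom mult_eq_0_iff)
  then have c: "(G s < 0 \<and> G 0 > 0) \<or> (G s > 0 \<and> G 0 < 0)"
    by (metis mult_neg_neg mult_pos_pos linorder_neqE_linordered_idom mult_eq_0_iff not_less_iff_gr_or_eq)
  have co: "\<And>a b. continuous_on {a..b} G" using assms(1) continuous_on_subset by blast
  have "\<exists>x. G x = 0"
  proof (cases "s \<le> 0")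
    case True
    show ?thesis using c
    proof
      assume "G s < 0 \<and> G 0 > 0"
      then show ?thesis using IVT'[where f=G and a=s and y=0 and b=0] True co by force
    next
      assume "G s > 0 \<and> G 0 < 0"
      then show ?thesis using IVT2'[where f=G and a=s and y=0 and b=0] True co by force
    qed
  next
    case False
    show ?thesis using c
    proof
      assume "G s < 0 \<and> G 0 > 0"
      then show ?thesis using IVT2'[where f=G and a=0 and y=0 and b=s] False co by force
    next
      assume "G s > 0 \<and> G 0 < 0"
      then show ?thesis using IVT'[where f=G and a=0 and y=0 and b=s] False co by force
    qed
  qed
  then show False using assms(2) by blast
qed

context bcurve begin

lemma sign_lemma:
  obtains \<epsilon> :: real where "\<epsilon> = 1 \<or> \<epsilon> = -1"
    "\<And>s y. y \<in> K \<Longrightarrow> \<epsilon> * cross2 (d1 \<gamma> s) (y - \<gamma> s) \<ge> 0"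
proof -
  obtain z0 where z0: "z0 \<in> interior K" using body unfolding convex_body_def by blast
  have ri: "rel_interior K = interior K"
    using body unfolding convex_body_def by (simp add: rel_interior_nonempty_interior)
  define G where "G s = cross2 (d1 \<gamma> s) (z0 - \<gamma> s)" for s
  have P: "G s \<noteq> 0 \<and> (\<forall>y\<in>K. cross2 (d1 \<gamma> s) (y - \<gamma> s) * G s \<ge> 0)" for s
  proof -
    let ?x = "\<gamma> s" let ?u = "d1 \<gamma> s"
    have xK: "?x \<in> K" by (rule g_in_K)
    have xni: "?x \<notin> rel_interior K" using g_frontier ri by (simp add: frontier_def)
    obtain a where a: "a \<noteq> 0" "\<And>y. y \<in> K \<Longrightarrow> a \<bullet> ?x \<le> a \<bullet> y"
      "\<And>y. y \<in> rel_interior K \<Longrightarrow> a \<bullet> ?x < a \<bullet> y"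
      using supporting_hyperplane_rel_boundary[OF convexK xK xni] by blast
    have au: "a \<bullet> ?u = 0"
    proof -
      have "((\<lambda>t. - (a \<bullet> \<gamma> t)) has_real_derivative - (a \<bullet> ?u)) (at s)"
        using inner_deriv[OF D1[of s], of a] by (intro derivative_intros)
      moreover have "\<forall>y. \<bar>s - y\<bar> < 1 \<longrightarrow> - (a \<bullet> \<gamma> y) \<le> - (a \<bullet> \<gamma> s)"
        using a(2) g_in_K by auto
      ultimately have "- (a \<bullet> ?u) = 0" by (rule DERIV_local_max[OF _ zero_less_one])
      then show ?thesis by simp
    qed
    have cu: "cross2 ?u a \<noteq> 0"
    proof
      assume "cross2 ?u a = 0"
      then have "(norm ?u)^2 * (norm a)^2 = 0" using cross_dot_sq[of ?u a] au by (simp add: inner_commute)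
      then show False using a(1) d1nz by simp
    qed
    have id1: "cross2 ?u v * cross2 ?u a = (a \<bullet> v) * (norm ?u)^2" for v
      by (rule cross_dot_id[OF au])
    have z0pos: "a \<bullet> (z0 - ?x) > 0" using a(3) z0 ri by (simp add: inner_diff_right)
    have "G s * cross2 ?u a \<noteq> 0" unfolding G_def using id1[of "z0 - ?x"] z0pos d1nz by simp
    then have Gnz: "G s \<noteq> 0" by auto
    have "cross2 ?u (y - ?x) * G s \<ge> 0" if "y \<in> K" for y
    proof -
      have ay: "a \<bullet> (y - ?x) \<ge> 0" using a(2) that by (simp add: inner_diff_right)
      have "(cross2 ?u (y - ?x) * G s) * (cross2 ?u a)^2
          = (cross2 ?u (y - ?x) * cross2 ?u a) * (G s * cross2 ?u a)"
        by (simp add: power2_eq_square algebra_simps)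
      also have "\<dots> = ((a \<bullet> (y - ?x)) * (norm ?u)^2) * ((a \<bullet> (z0 - ?x)) * (norm ?u)^2)"
        unfolding G_def using id1 by simp
      also have "\<dots> \<ge> 0" using ay z0pos by simp
      finally have "(cross2 ?u (y - ?x) * G s) * (cross2 ?u a)^2 \<ge> 0" .
      moreover have "(cross2 ?u a)^2 > 0" using cu by simp
      ultimately show ?thesis by (simp add: zero_le_mult_iff)
    qed
    then show ?thesis using Gnz by blast
  qed
  have Gc: "continuous_on UNIV G"
    unfolding G_def cross2_def
    by (intro continuous_intros continuous_on_compose2[OF continuous_on_Re] cont_d1 cont_g) auto
  define \<epsilon> where "\<epsilon> = (if G 0 > 0 then 1 else (-1::real))"
  show ?thesis
  proof (rule that[of \<epsilon>])
    show "\<epsilon> = 1 \<or> \<epsilon> = -1" by (simp add: \<epsilon>_def)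
    fix s y assume y: "y \<in> K"
    have g: "G s * G 0 > 0" by (rule sign_const[OF Gc]) (use P in blast)
    have h: "cross2 (d1 \<gamma> s) (y - \<gamma> s) * G s \<ge> 0" using P y by blast
    have G0: "G 0 \<noteq> 0" using P by blast
    show "\<epsilon> * cross2 (d1 \<gamma> s) (y - \<gamma> s) \<ge> 0"
    proof (cases "G 0 > 0")
      case True
      then have "G s > 0" using g by (simp add: zero_less_mult_iff)
      then show ?thesis using h True by (simp add: \<epsilon>_def zero_le_mult_iff)
    next
      case False
      then have "G 0 < 0" using G0 by simp
      then have "G s < 0" using g by (simp add: zero_less_mult_iff)
      then have "cross2 (d1 \<gamma> s) (y - \<gamma> s) \<le> 0" using h by (simp add: zero_le_mult_iff)
      then show ?thesis using \<open>G 0 < 0\<close> by (simp add: \<epsilon>_def)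
    qed
  qed
qed

end

lemma sin_line_angle:
  assumes "u \<noteq> 0" "v \<noteq> 0"
  shows "sin (line_angle u v) = \<bar>cross2 u v\<bar> / (norm u * norm v)"
proof -
  define x where "x = (u \<bullet> v) / (norm u * norm v)"
  have nuv: "norm u * norm v > 0" using assms by simp
  have "\<bar>u \<bullet> v\<bar> \<le> norm u * norm v" by (rule Cauchy_Schwarz_ineq2)
  then have xb: "\<bar>x\<bar> \<le> 1" unfolding x_def using nuv by (simp add: abs_div divide_le_eq_1)
  have s1: "sin (line_angle u v) = sin (arccos x)"
    unfolding line_angle_def vec_angle_def x_def[symmetric]
    by (cases "arccos x \<le> pi - arccos x") (auto simp: min_def)
  have "sin (arccos x) = sqrt (1 - x^2)" using xb by (intro sin_arccos) auto
  also have "1 - x^2 = (cross2 u v)^2 / (norm u * norm v)^2"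
  proof -
    have d: "(norm u * norm v)^2 \<noteq> 0" using assms by simp
    have "(cross2 u v)^2 / (norm u * norm v)^2 = ((norm u * norm v)^2 - (u \<bullet> v)^2) / (norm u * norm v)^2"
      using cross_dot_sq[of u v] by (simp add: power_mult_distrib)
    also have "\<dots> = 1 - x^2" unfolding x_def using d by (simp add: diff_divide_distrib power_divide)
    finally show ?thesis by simp
  qed
  also have "sqrt \<dots> = \<bar>cross2 u v\<bar> / (norm u * norm v)"
    using nuv by (simp add: real_sqrt_divide)
  finally show ?thesis using s1 by simp
qed

locale chordc = bcurve +
  fixes U :: "(complex \<times> complex) set"
  assumes Uneq: "U \<subseteq> {(p, q). p \<noteq> q}"
    and Uopen: "openin (top_of_set (frontier K \<times> frontier K)) U"
    and Ucov: "\<forall>p\<in>frontier K. \<exists>q. (p, q) \<in> U \<or> (q, p) \<in> U"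
    and Ucond: "\<forall>s t. (\<gamma> s, \<gamma> t) \<in> U \<longrightarrow>
           curvature \<gamma> s \<noteq> 0 \<and> curvature \<gamma> t \<noteq> 0 \<and>
           sin (line_angle (d1 \<gamma> s) (\<gamma> t - \<gamma> s)) ^ 3 / curvature \<gamma> s =
           sin (line_angle (d1 \<gamma> t) (\<gamma> t - \<gamma> s)) ^ 3 / curvature \<gamma> t"
begin

lemma Usub: "U \<subseteq> frontier K \<times> frontier K"
  using openin_subset[OF Uopen] by simp

lemma curv_nz: "curvature \<gamma> s \<noteq> 0"
proof -
  obtain q where q: "(\<gamma> s, q) \<in> U \<or> (q, \<gamma> s) \<in> U" using Ucov g_frontier by blast
  then have "q \<in> frontier K" using Usub by auto
  then obtain t where "q = \<gamma> t" using frontier_g by blast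
  then show ?thesis using q Ucond by blast
qed

definition cr :: "real \<Rightarrow> real" where "cr s = cross2 (d1 \<gamma> s) (d2 \<gamma> s)"

lemma cr_nz: "cr s \<noteq> 0"
  using curv_nz[of s] by (auto simp: curvature_def cr_def)

lemma cr_cont: "continuous_on UNIV cr"
  unfolding cr_def cross2_def
  by (intro continuous_intros continuous_on_compose2[OF continuous_on_Re] cont_d1 cont_d2) auto

definition \<delta> :: real where "\<delta> = (if cr 0 > 0 then 1 else -1)"

lemma \<delta>_pm: "\<delta> = 1 \<or> \<delta> = -1" by (simp add: \<delta>_def)
lemma \<delta>_sq: "\<delta> * \<delta> = 1" using \<delta>_pm by auto

lemma \<delta>cr_pos: "\<delta> * cr s > 0"
proof -
  have g: "cr s * cr 0 > 0" by (rule sign_const[OF cr_cont cr_nz])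
  show ?thesis
  proof (cases "cr 0 > 0")
    case True then show ?thesis using g by (simp add: \<delta>_def zero_less_mult_iff)
  next
    case False then have "cr 0 < 0" using cr_nz[of 0] by simp
    then show ?thesis using g False by (simp add: \<delta>_def zero_less_mult_iff)
  qed
qed

lemma abs_cr: "\<bar>cr s\<bar> = \<delta> * cr s"
  using \<delta>cr_pos[of s] \<delta>_pm by auto

definition \<rho> :: "real \<Rightarrow> real" where "\<rho> s = root 3 (\<delta> * cr s)"

lemma \<rho>_pos: "\<rho> s > 0" unfolding \<rho>_def using \<delta>cr_pos by simp
lemma \<rho>_cube: "(\<rho> s)^3 = \<delta> * cr s" unfolding \<rho>_def using \<delta>cr_pos[of s] by simp

lemma \<rho>_cont: "continuous_on UNIV \<rho>"
  unfolding \<rho>_def by (intro continuous_intros cr_cont)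

lemma curv_eq: "curvature \<gamma> s = (\<rho> s)^3 / (norm (d1 \<gamma> s))^3"
  unfolding curvature_def \<rho>_cube abs_cr[unfolded cr_def] cr_def by simp

definition T :: "real \<Rightarrow> complex" where "T s = (1 / \<rho> s) *\<^sub>R d1 \<gamma> s"

definition Rel :: "real \<Rightarrow> real \<Rightarrow> bool" where
  "Rel s t \<longleftrightarrow> cross2 (T s + T t) (\<gamma> t - \<gamma> s) = 0"

lemma Rel_sym: "Rel s t \<longleftrightarrow> Rel t s"
  unfolding Rel_def
  by (metis add.commute cross2_minus_right minus_diff_eq neg_equal_0_iff_equal)

lemma rel_U:
  assumes U: "(\<gamma> s, \<gamma> t) \<in> U"
  shows "Rel s t"
proof -
  obtain \<epsilon> where e: "\<epsilon> = 1 \<or> \<epsilon> = -1" "\<And>s y. y \<in> K \<Longrightarrow> \<epsilon> * cross2 (d1 \<gamma> s) (y - \<gamma> s) \<ge> 0"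
    using sign_lemma by blast
  let ?u = "d1 \<gamma> s" let ?w = "d1 \<gamma> t" let ?c = "\<gamma> t - \<gamma> s"
  have c0: "?c \<noteq> 0" using U Uneq by auto
  have u0: "?u \<noteq> 0" and w0: "?w \<noteq> 0" by (rule d1nz)+
  have eq: "sin (line_angle ?u ?c) ^ 3 / curvature \<gamma> s = sin (line_angle ?w ?c) ^ 3 / curvature \<gamma> t"
    using Ucond U by blast
  have key: "\<And>v r a. v \<noteq> 0 \<Longrightarrow> r > 0 \<Longrightarrow> (\<bar>a\<bar> / (norm v * norm ?c))^3 / (r^3 / (norm v)^3)
       = (\<bar>a\<bar> / r)^3 / (norm ?c)^3"
    using c0 by (simp add: field_simps power_mult_distrib power_divide)
  have "(\<bar>cross2 ?u ?c\<bar> / \<rho> s)^3 / (norm ?c)^3 = (\<bar>cross2 ?w ?c\<bar> / \<rho> t)^3 / (norm ?c)^3"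
    using eq unfolding sin_line_angle[OF u0 c0] sin_line_angle[OF w0 c0] curv_eq
    using key[OF u0 \<rho>_pos[of s]] key[OF w0 \<rho>_pos[of t]] by simp
  then have "(\<bar>cross2 ?u ?c\<bar> / \<rho> s)^3 = (\<bar>cross2 ?w ?c\<bar> / \<rho> t)^3" using c0 by simp
  then have ab: "\<bar>cross2 ?u ?c\<bar> / \<rho> s = \<bar>cross2 ?w ?c\<bar> / \<rho> t"
    by (rule power_eq_imp_eq_base) (auto simp: \<rho>_pos less_imp_le)
  have s1: "\<epsilon> * cross2 ?u ?c \<ge> 0" using e(2) g_in_K by blast
  have s2: "\<epsilon> * cross2 ?w (\<gamma> s - \<gamma> t) \<ge> 0" using e(2) g_in_K by blast
  have cw: "cross2 ?w (\<gamma> s - \<gamma> t) = - cross2 ?w ?c"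
    by (metis cross2_minus_right minus_diff_eq)
  have a1: "\<bar>cross2 ?u ?c\<bar> = \<epsilon> * cross2 ?u ?c" using s1 e(1) by auto
  have a2: "\<bar>cross2 ?w ?c\<bar> = - \<epsilon> * cross2 ?w ?c" using s2 e(1) cw by auto
  have "\<epsilon> * (cross2 ?u ?c / \<rho> s + cross2 ?w ?c / \<rho> t) = 0"
    using ab unfolding a1 a2 by (simp add: algebra_simps)
  then have "cross2 ?u ?c / \<rho> s + cross2 ?w ?c / \<rho> t = 0" using e(1) by auto
  then show ?thesis unfolding Rel_def T_def cross2_add_left cross2_scaleR_left by simp
qed

lemma V_open: "open {p. (\<gamma> (fst p), \<gamma> (snd p)) \<in> U}"
proof -
  obtain W where W: "open W" "U = (frontier K \<times> frontier K) \<inter> W"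
    using Uopen openin_open by metis
  have eq: "{p. (\<gamma> (fst p), \<gamma> (snd p)) \<in> U} = (\<lambda>p. (\<gamma> (fst p), \<gamma> (snd p))) -` W"
    using W(2) g_frontier by auto
  have "continuous_on UNIV (\<lambda>p::real\<times>real. (\<gamma> (fst p), \<gamma> (snd p)))"
    by (intro continuous_on_Pair continuous_on_compose2[OF cont_g] continuous_intros) auto
  then show ?thesis unfolding eq by (rule open_vimage[OF W(1)])
qed

lemma local_rect:
  obtains t0 e where "e > 0" "\<And>s t. \<bar>s - s0\<bar> < e \<Longrightarrow> \<bar>t - t0\<bar> < e \<Longrightarrow> Rel s t"
proof -
  obtain q where q: "(\<gamma> s0, q) \<in> U \<or> (q, \<gamma> s0) \<in> U" using Ucov g_frontier by blast
  then have "q \<in> frontier K" using Usub by auto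
  then obtain t0 where t0: "q = \<gamma> t0" using frontier_g by blast
  have box: "\<exists>e>0. \<forall>s t. \<bar>s - a\<bar> < e \<longrightarrow> \<bar>t - b\<bar> < e \<longrightarrow> (\<gamma> s, \<gamma> t) \<in> U"
    if ab: "(\<gamma> a, \<gamma> b) \<in> U" for a b
  proof -
    obtain r where r: "r > 0" "ball (a, b) r \<subseteq> {p. (\<gamma> (fst p), \<gamma> (snd p)) \<in> U}"
      using V_open ab by (metis (no_types, lifting) fst_conv snd_conv mem_Collect_eq open_contains_ball)
    have "(\<gamma> s, \<gamma> t) \<in> U" if "\<bar>s - a\<bar> < r/2" "\<bar>t - b\<bar> < r/2" for s t
    proof -
      have "dist (a, b) (s, t) = norm (a - s, b - t)" by (simp add: dist_norm)
      also have "\<dots> \<le> norm (a - s) + norm (b - t)" by (rule norm_Pair_le)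
      also have "\<dots> < r"
      proof -
        have "\<bar>a - s\<bar> = \<bar>s - a\<bar>" "\<bar>b - t\<bar> = \<bar>t - b\<bar>" by (simp_all add: abs_minus_commute)
        then show ?thesis using that by simp
      qed
      finally show ?thesis using r(2) by auto
    qed
    then show ?thesis using r(1) by (intro exI[of _ "r/2"]) auto
  qed
  show ?thesis
  proof (cases "(\<gamma> s0, \<gamma> t0) \<in> U")
    case True
    then obtain e where "e > 0" "\<forall>s t. \<bar>s - s0\<bar> < e \<longrightarrow> \<bar>t - t0\<bar> < e \<longrightarrow> (\<gamma> s, \<gamma> t) \<in> U"
      using box by blast
    then show ?thesis using that[of e t0] rel_U by blast
  next
    case False
    then have "(\<gamma> t0, \<gamma> s0) \<in> U" using q t0 by simp
    then obtain e where "e > 0" "\<forall>s t. \<bar>s - t0\<bar> < e \<longrightarrow> \<bar>t - s0\<bar> < e \<longrightarrow> (\<gamma> s, \<gamma> t) \<in> U"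
      using box by blast
    then show ?thesis using that[of e t0] rel_U Rel_sym by blast
  qed
qed

end

lemma deriv_zero_nbhd:
  fixes f :: "real \<Rightarrow> real"
  assumes "e > 0" "\<And>y. \<bar>y - x\<bar> < e \<Longrightarrow> f y = f x" "(f has_real_derivative l) (at x)"
  shows "l = 0"
proof (rule DERIV_local_max[OF assms(3) assms(1)], intro allI impI)
  fix y assume "\<bar>x - y\<bar> < e"
  then have "\<bar>y - x\<bar> < e" by (simp add: abs_minus_commute)
  from assms(2)[OF this] show "f y \<le> f x" by simp
qed

lemma perp_zero:
  fixes w u v :: complex
  assumes "w \<bullet> u = 0" "w \<bullet> v = 0" "cross2 u v \<noteq> 0"
  shows "w = 0"
proof -
  have h1: "Re w * Re u = - (Im w * Im u)" and h2: "Re w * Re v = - (Im w * Im v)"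
    using assms(1,2) by (simp_all add: inner_complex_def eq_neg_iff_add_eq_0)
  have "Re w * cross2 u v = Im v * (Re w * Re u) - Im u * (Re w * Re v)"
    by (simp add: cross2_def algebra_simps)
  also have "\<dots> = 0" unfolding h1 h2 by (simp add: algebra_simps)
  finally have r: "Re w = 0" using assms(3) by simp
  have h1': "Im w * Im u = - (Re w * Re u)" and h2': "Im w * Im v = - (Re w * Re v)"
    using h1 h2 by simp_all
  have "Im w * cross2 u v = Re u * (Im w * Im v) - Re v * (Im w * Im u)"
    by (simp add: cross2_def algebra_simps)
  also have "\<dots> = 0" unfolding h1' h2' by (simp add: algebra_simps)
  finally have i: "Im w = 0" using assms(3) by simp
  show ?thesis using r i by (simp add: complex_eq_iff)
qed

lemma cross_as_inner: "cross2 a z = Complex (- Im a) (Re a) \<bullet> z"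
  by (simp add: cross2_def inner_complex_def)

fun amap :: "real \<times> real \<times> real \<times> real \<Rightarrow> complex \<Rightarrow> complex" where
  "amap (a, b, c, e) z = Complex (a * Re z + b * Im z) (c * Re z + e * Im z)"

lemma cramer:
  fixes X a1 a2 :: complex
  assumes "cross2 X a1 = \<beta>1" "cross2 X a2 = \<beta>2" "cross2 a1 a2 \<noteq> 0"
  shows "X = (1 / cross2 a1 a2) *\<^sub>R (\<beta>2 *\<^sub>R a1 - \<beta>1 *\<^sub>R a2)"
proof -
  have r: "Re X * cross2 a1 a2 = \<beta>2 * Re a1 - \<beta>1 * Re a2"
    unfolding assms(1,2)[symmetric] by (simp add: cross2_def algebra_simps)
  have i: "Im X * cross2 a1 a2 = \<beta>2 * Im a1 - \<beta>1 * Im a2"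
    unfolding assms(1,2)[symmetric] by (simp add: cross2_def algebra_simps)
  show ?thesis using r i assms(3) by (simp add: complex_eq_iff field_simps)
qed

lemma cramer_affine:
  fixes a1 a2 b1 b2 d :: complex
  shows "\<exists>M d. \<forall>z. (1 / D) *\<^sub>R ((k2 + cross2 b2 z) *\<^sub>R a1 - (k1 + cross2 b1 z) *\<^sub>R a2) = amap M z + d"
proof -
  let ?M = "((- Im b2 * Re a1 + Im b1 * Re a2) / D, (Re b2 * Re a1 - Re b1 * Re a2) / D,
             (- Im b2 * Im a1 + Im b1 * Im a2) / D, (Re b2 * Im a1 - Re b1 * Im a2) / D)"
  let ?d = "(1 / D) *\<^sub>R (k2 *\<^sub>R a1 - k1 *\<^sub>R a2)"
  have "\<forall>z. (1 / D) *\<^sub>R ((k2 + cross2 b2 z) *\<^sub>R a1 - (k1 + cross2 b1 z) *\<^sub>R a2) = amap ?M z + ?d"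
    by (auto simp: complex_eq_iff cross2_def field_simps diff_divide_distrib add_divide_distrib)
  then show ?thesis by blast
qed

context bcurve begin

lemma flat:
  assumes "e > 0" "\<And>s. \<bar>s - s0\<bar> < e \<Longrightarrow> w \<bullet> \<gamma> s = k"
  shows "w \<bullet> d1 \<gamma> s0 = 0 \<and> w \<bullet> d2 \<gamma> s0 = 0"
proof -
  have z: "w \<bullet> d1 \<gamma> y = 0" if y: "\<bar>y - s0\<bar> < e" for y
  proof (rule deriv_zero_nbhd[where f="\<lambda>s. w \<bullet> \<gamma> s" and x=y and e="e - \<bar>y - s0\<bar>"])
    show "e - \<bar>y - s0\<bar> > 0" using y by simp
    fix z assume "\<bar>z - y\<bar> < e - \<bar>y - s0\<bar>"
    then have "\<bar>z - s0\<bar> < e" by linarith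
    then show "w \<bullet> \<gamma> z = w \<bullet> \<gamma> y" using assms(2) y by simp
  next
    show "((\<lambda>s. w \<bullet> \<gamma> s) has_real_derivative w \<bullet> d1 \<gamma> y) (at y)" by (rule inner_deriv[OF D1])
  qed
  have "w \<bullet> d2 \<gamma> s0 = 0"
  proof (rule deriv_zero_nbhd[where f="\<lambda>s. w \<bullet> d1 \<gamma> s" and x=s0 and e=e])
    show "e > 0" by fact
    fix y assume "\<bar>y - s0\<bar> < e"
    then show "w \<bullet> d1 \<gamma> y = w \<bullet> d1 \<gamma> s0" using z assms(1) by simp
  next
    show "((\<lambda>s. w \<bullet> d1 \<gamma> s) has_real_derivative w \<bullet> d2 \<gamma> s0) (at s0)" by (rule inner_deriv[OF D2])
  qed
  then show ?thesis using z assms(1) by simp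
qed

end

context chordc begin

lemma flat_zero:
  assumes "e > 0" "\<And>s. \<bar>s - s0\<bar> < e \<Longrightarrow> w \<bullet> \<gamma> s = k"
  shows "w = 0"
  using flat[OF assms] perp_zero cr_nz unfolding cr_def by blast

lemma noncol:
  assumes "e > 0"
  shows "\<exists>t2 t3. \<bar>t2 - t0\<bar> < e \<and> \<bar>t3 - t0\<bar> < e \<and> cross2 (\<gamma> t0 - \<gamma> t2) (\<gamma> t0 - \<gamma> t3) \<noteq> 0"
proof (rule ccontr)
  assume H: "\<not> ?thesis"
  define e1 where "e1 = min e L / 2"
  have e1: "e1 > 0" "e1 < e" "e1 < L" using assms Lpos by (auto simp: e1_def)
  define t2 where "t2 = t0 + e1"
  have a0: "\<gamma> t0 - \<gamma> t2 \<noteq> 0" using g_neq[of t0 t2] e1 by (simp add: t2_def)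
  let ?a = "\<gamma> t0 - \<gamma> t2"
  have "Complex (- Im ?a) (Re ?a) \<bullet> \<gamma> s = Complex (- Im ?a) (Re ?a) \<bullet> \<gamma> t0"
    if "\<bar>s - t0\<bar> < e" for s
  proof -
    have "\<bar>t2 - t0\<bar> < e" using e1 by (simp add: t2_def)
    then have "cross2 ?a (\<gamma> t0 - \<gamma> s) = 0" using H that by blast
    then show ?thesis by (simp only: cross_as_inner inner_diff_right)
  qed
  then have "Complex (- Im ?a) (Re ?a) = 0" by (intro flat_zero[OF assms]) 
  then show False using a0 by (simp add: complex_eq_iff)
qed

lemma local_lin:
  "\<exists>e>0. \<exists>M d. \<forall>s. \<bar>s - s0\<bar> < e \<longrightarrow> T s = amap M (\<gamma> s) + d"
proof -
  obtain t0 e where e: "e > 0" "\<And>s t. \<bar>s - s0\<bar> < e \<Longrightarrow> \<bar>t - t0\<bar> < e \<Longrightarrow> Rel s t"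
    using local_rect by blast
  obtain t2 t3 where t: "\<bar>t2 - t0\<bar> < e" "\<bar>t3 - t0\<bar> < e" and D: "cross2 (\<gamma> t0 - \<gamma> t2) (\<gamma> t0 - \<gamma> t3) \<noteq> 0"
    using noncol[OF e(1)] by blast
  define a1 where "a1 = \<gamma> t0 - \<gamma> t2"
  define a2 where "a2 = \<gamma> t0 - \<gamma> t3"
  define b1 where "b1 = T t0 - T t2"
  define b2 where "b2 = T t0 - T t3"
  define k1 where "k1 = cross2 (T t2) (\<gamma> t2) - cross2 (T t0) (\<gamma> t0)"
  define k2 where "k2 = cross2 (T t3) (\<gamma> t3) - cross2 (T t0) (\<gamma> t0)"
  obtain M d where Md: "\<forall>z. (1 / cross2 a1 a2) *\<^sub>R ((k2 + cross2 b2 z) *\<^sub>R a1 - (k1 + cross2 b1 z) *\<^sub>R a2) = amap M z + d"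
    using cramer_affine by blast
  have relx: "cross2 (T s) (\<gamma> t - \<gamma> s) + cross2 (T t) (\<gamma> t - \<gamma> s) = 0" if "Rel s t" for s t
    using that unfolding Rel_def cross2_add_left by simp
  have "T s = amap M (\<gamma> s) + d" if s: "\<bar>s - s0\<bar> < e" for s
  proof -
    have r0: "Rel s t0" using e(2) s by simp
    have r2: "Rel s t2" using e(2) s t by simp
    have r3: "Rel s t3" using e(2) s t by simp
    have c1: "cross2 (T s) a1 = k1 + cross2 b1 (\<gamma> s)"
      using relx[OF r0] relx[OF r2] unfolding a1_def k1_def b1_def
      by (simp add: cross2_diff_right cross2_diff_left algebra_simps)
    have c2: "cross2 (T s) a2 = k2 + cross2 b2 (\<gamma> s)"
      using relx[OF r0] relx[OF r3] unfolding a2_def k2_def b2_def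
      by (simp add: cross2_diff_right cross2_diff_left algebra_simps)
    have "T s = (1 / cross2 a1 a2) *\<^sub>R ((k2 + cross2 b2 (\<gamma> s)) *\<^sub>R a1 - (k1 + cross2 b1 (\<gamma> s)) *\<^sub>R a2)"
      by (rule cramer[OF c1 c2]) (use D a1_def a2_def in simp)
    then show ?thesis using Md by simp
  qed
  then show ?thesis using e(1) by blast
qed

lemma lin_unique:
  assumes "e > 0" "\<And>s. \<bar>s - s0\<bar> < e \<Longrightarrow> amap M (\<gamma> s) + d = amap M' (\<gamma> s) + d'"
  shows "M = M' \<and> d = d'"
proof -
  obtain a b c f where M: "M = (a, b, c, f)" by (cases M) auto
  obtain a' b' c' f' where M': "M' = (a', b', c', f')" by (cases M') auto
  have "Complex (a - a') (b - b') \<bullet> \<gamma> s = Re d' - Re d" if "\<bar>s - s0\<bar> < e" for s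
    using arg_cong[OF assms(2)[OF that], of Re] unfolding M M'
    by (simp add: inner_complex_def algebra_simps)
  then have 1: "Complex (a - a') (b - b') = 0" by (rule flat_zero[OF assms(1)])
  have "Complex (c - c') (f - f') \<bullet> \<gamma> s = Im d' - Im d" if "\<bar>s - s0\<bar> < e" for s
    using arg_cong[OF assms(2)[OF that], of Im] unfolding M M'
    by (simp add: inner_complex_def algebra_simps)
  then have 2: "Complex (c - c') (f - f') = 0" by (rule flat_zero[OF assms(1)])
  have MM: "M = M'" using 1 2 unfolding M M' by (simp add: complex_eq_iff)
  have "d = d'" using assms(2)[of s0] assms(1) MM by simp
  then show ?thesis using MM by simp
qed

end

context chordc begin

definition good :: "real \<Rightarrow> (real \<times> real \<times> real \<times> real) \<Rightarrow> complex \<Rightarrow> bool" where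
  "good s0 M d \<longleftrightarrow> (\<exists>e>0. \<forall>s. \<bar>s - s0\<bar> < e \<longrightarrow> T s = amap M (\<gamma> s) + d)"

lemma good_ex: "\<exists>M d. good s0 M d"
  using local_lin[of s0] unfolding good_def by blast

lemma good_unique: "good s0 M d \<Longrightarrow> good s0 M' d' \<Longrightarrow> M = M' \<and> d = d'"
proof -
  assume "good s0 M d" "good s0 M' d'"
  then obtain e e' where e: "e > 0" "\<And>s. \<bar>s - s0\<bar> < e \<Longrightarrow> T s = amap M (\<gamma> s) + d"
    and e': "e' > 0" "\<And>s. \<bar>s - s0\<bar> < e' \<Longrightarrow> T s = amap M' (\<gamma> s) + d'"
    unfolding good_def by blast
  show ?thesis
  proof (rule lin_unique[of "min e e'"])
    show "min e e' > 0" using e e' by simp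
    fix s assume "\<bar>s - s0\<bar> < min e e'"
    then show "amap M (\<gamma> s) + d = amap M' (\<gamma> s) + d'" using e(2) e'(2) by fastforce
  qed
qed

lemma good_spread:
  assumes "e > 0" "\<And>s. \<bar>s - sb\<bar> < e \<Longrightarrow> T s = amap M (\<gamma> s) + d" "\<bar>sa - sb\<bar> < e"
  shows "good sa M d"
  unfolding good_def
proof (intro exI[of _ "e - \<bar>sa - sb\<bar>"] conjI allI impI)
  show "e - \<bar>sa - sb\<bar> > 0" using assms(3) by simp
  fix s assume "\<bar>s - sa\<bar> < e - \<bar>sa - sb\<bar>"
  then have "\<bar>s - sb\<bar> < e" by linarith
  then show "T s = amap M (\<gamma> s) + d" by (rule assms(2))
qed

lemma global_lin: "\<exists>M d. \<forall>s. T s = amap M (\<gamma> s) + d"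
proof -
  obtain M0 d0 where g0: "good 0 M0 d0" using good_ex by blast
  define S where "S = {s. good s M0 d0}"
  have oS: "open S" unfolding open_dist
  proof
    fix x assume "x \<in> S"
    then obtain e where e: "e > 0" "\<And>s. \<bar>s - x\<bar> < e \<Longrightarrow> T s = amap M0 (\<gamma> s) + d0"
      unfolding S_def good_def by blast
    show "\<exists>e>0. \<forall>y. dist y x < e \<longrightarrow> y \<in> S"
    proof (intro exI[of _ e] conjI allI impI)
      show "e > 0" by fact
      fix y assume "dist y x < e"
      then show "y \<in> S" using good_spread[where sa=y, OF e(1) e(2)] unfolding S_def dist_real_def by simp
    qed
  qed
  have oC: "open (- S)" unfolding open_dist
  proof
    fix x assume "x \<in> - S"
    obtain M d where "good x M d" using good_ex by blast
    then obtain e where e: "e > 0" "\<And>s. \<bar>s - x\<bar> < e \<Longrightarrow> T s = amap M (\<gamma> s) + d"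
      unfolding good_def by blast
    have "(M, d) \<noteq> (M0, d0)" using \<open>x \<in> - S\<close> \<open>good x M d\<close> unfolding S_def by auto
    have "y \<in> - S" if "dist y x < e" for y
    proof
      assume "y \<in> S"
      then have "good y M0 d0" by (simp add: S_def)
      moreover have "good y M d" using good_spread[where sa=y, OF e(1) e(2)] that by (simp add: dist_real_def)
      ultimately show False using good_unique \<open>(M, d) \<noteq> (M0, d0)\<close> by blast
    qed
    then show "\<exists>e>0. \<forall>y. dist y x < e \<longrightarrow> y \<in> - S" using e(1) by blast
  qed
  have "S \<inter> UNIV = {} \<or> (- S) \<inter> UNIV = {}"
    by (rule connectedD[OF connected_UNIV oS oC]) auto
  moreover have "0 \<in> S" using g0 by (simp add: S_def)
  ultimately have "S = UNIV" by auto
  have "T s = amap M0 (\<gamma> s) + d0" for s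
  proof -
    have "good s M0 d0" using \<open>S = UNIV\<close> by (simp add: S_def set_eq_iff)
    then obtain e where "e > 0" "\<forall>s'. \<bar>s' - s\<bar> < e \<longrightarrow> T s' = amap M0 (\<gamma> s') + d0"
      unfolding good_def by blast
    then show ?thesis by simp
  qed
  then show ?thesis by blast
qed

end

lemma amap_deriv:
  fixes g :: "real \<Rightarrow> complex"
  assumes "(g has_vector_derivative g') (at x)"
  shows "((\<lambda>s. amap M (g s)) has_vector_derivative amap M g') (at x)"
proof -
  obtain a b c f where M: "M = (a, b, c, f)" by (cases M) auto
  have r: "((\<lambda>s. a * Re (g s) + b * Im (g s)) has_real_derivative a * Re g' + b * Im g') (at x)"
    using DERIV_add[OF DERIV_cmult[OF Re_deriv[OF assms]] DERIV_cmult[OF Im_deriv[OF assms]]] by simp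
  have i: "((\<lambda>s. c * Re (g s) + f * Im (g s)) has_real_derivative c * Re g' + f * Im g') (at x)"
    using DERIV_add[OF DERIV_cmult[OF Re_deriv[OF assms]] DERIV_cmult[OF Im_deriv[OF assms]]] by simp
  show ?thesis unfolding has_vector_derivative_complex_iff M using r i by simp
qed

lemma amap_scale: "amap M (r *\<^sub>R z) = r *\<^sub>R amap M z"
  by (cases M) (simp add: complex_eq_iff algebra_simps)

lemma amap_add: "amap M (z + w) = amap M z + amap M w"
  by (cases M) (simp add: complex_eq_iff algebra_simps)

lemma amap_diff: "amap M (z - w) = amap M z - amap M w"
  by (cases M) (simp add: complex_eq_iff algebra_simps)

lemma cross_A2: "cross2 z (amap (a, b, c, f) (amap (a, b, c, f) z)) = (a + f) * cross2 z (amap (a, b, c, f) z)"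
  by (simp add: cross2_def algebra_simps power2_eq_square)

locale linc = chordc +
  fixes a b c f :: real and d :: complex
  assumes lin: "\<And>s. T s = amap (a, b, c, f) (\<gamma> s) + d"
begin

abbreviation Am where "Am \<equiv> amap (a, b, c, f)"

definition Y :: "real \<Rightarrow> complex" where "Y s = Am (\<gamma> s) + d"

lemma d1_eq: "d1 \<gamma> s = \<rho> s *\<^sub>R Y s"
proof -
  have "T s = Y s" using lin by (simp add: Y_def)
  moreover have "d1 \<gamma> s = \<rho> s *\<^sub>R ((1 / \<rho> s) *\<^sub>R d1 \<gamma> s)" using \<rho>_pos[of s] by simp
  ultimately show ?thesis unfolding T_def by simp
qed

lemma Y_nz: "Y s \<noteq> 0" using d1_eq[of s] d1nz[of s] by auto

lemma Y_deriv: "(Y has_vector_derivative \<rho> s *\<^sub>R Am (Y s)) (at s)"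
proof -
  have "((\<lambda>s. Am (\<gamma> s) + d) has_vector_derivative Am (d1 \<gamma> s) + 0) (at s)"
    by (intro derivative_intros amap_deriv D1)
  then show ?thesis unfolding Y_def[abs_def] d1_eq amap_scale[symmetric] by (simp add: Y_def)
qed

lemma cross_YAY: "cross2 (Y s) (Am (Y s)) = \<delta>"
proof -
  have hd: "((\<lambda>t. cross2 (Y t) (d1 \<gamma> t)) has_real_derivative
      cross2 (\<rho> s *\<^sub>R Am (Y s)) (d1 \<gamma> s) + cross2 (Y s) (d2 \<gamma> s)) (at s)"
    by (rule cross_deriv_at[OF Y_deriv D2])
  have z: "cross2 (Y t) (d1 \<gamma> t) = 0" for t unfolding d1_eq by (simp add: cross2_scaleR_right)
  have "cross2 (\<rho> s *\<^sub>R Am (Y s)) (d1 \<gamma> s) + cross2 (Y s) (d2 \<gamma> s) = 0"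
    by (rule deriv_zero_nbhd[OF zero_less_one _ hd]) (simp add: z)
  then have e1: "cross2 (Y s) (d2 \<gamma> s) = (\<rho> s)^2 * cross2 (Y s) (Am (Y s))"
    unfolding d1_eq cross2_scaleR_left cross2_scaleR_right
    using cross2_anti[of "Am (Y s)" "Y s"] by (simp add: power2_eq_square algebra_simps)
  have "cr s = (\<rho> s)^3 * cross2 (Y s) (Am (Y s))"
    unfolding cr_def d1_eq cross2_scaleR_left e1 by (simp add: power2_eq_square power3_eq_cube)
  then have "cr s = \<delta> * cr s * cross2 (Y s) (Am (Y s))" using \<rho>_cube by simp
  then have "\<delta> * cross2 (Y s) (Am (Y s)) = 1" using cr_nz[of s]
    by (metis mult.assoc mult.commute mult_cancel_left1)
  then show ?thesis using \<delta>_pm by auto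
qed

lemma trace0: "a + f = 0"
proof -
  have AY: "((\<lambda>t. Am (Y t)) has_vector_derivative \<rho> 0 *\<^sub>R Am (Am (Y 0))) (at 0)"
    using amap_deriv[where M="(a, b, c, f)", OF Y_deriv[of 0]] by (simp only: amap_scale)
  have hd: "((\<lambda>t. cross2 (Y t) (Am (Y t))) has_real_derivative
      cross2 (\<rho> 0 *\<^sub>R Am (Y 0)) (Am (Y 0)) + cross2 (Y 0) (\<rho> 0 *\<^sub>R Am (Am (Y 0)))) (at 0)"
    by (rule cross_deriv_at[OF Y_deriv AY])
  have "cross2 (\<rho> 0 *\<^sub>R Am (Y 0)) (Am (Y 0)) + cross2 (Y 0) (\<rho> 0 *\<^sub>R Am (Am (Y 0))) = 0"
    by (rule deriv_zero_nbhd[OF zero_less_one _ hd]) (simp only: cross_YAY)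
  then have "\<rho> 0 * ((a + f) * \<delta>) = 0"
    unfolding cross2_scaleR_left cross2_scaleR_right cross_A2 cross_YAY by simp
  then show ?thesis using \<rho>_pos[of 0] \<delta>_pm by auto
qed

end

lemma mvt_per:
  fixes \<phi> \<phi>' :: "real \<Rightarrow> real"
  assumes L: "L > 0" and d: "\<And>x. (\<phi> has_real_derivative \<phi>' x) (at x)" and p: "\<phi> L = \<phi> 0"
  shows "\<exists>z. 0 < z \<and> z < L \<and> \<phi>' z = 0"
proof -
  have c: "continuous_on {0..L} \<phi>"
    using d by (meson DERIV_continuous continuous_at_imp_continuous_on)
  have df: "\<phi> differentiable (at x)" for x using d real_differentiable_def by blast
  obtain l z where z: "0 < z" "z < L" "DERIV \<phi> z :> l" "\<phi> L - \<phi> 0 = (L - 0) * l"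
    using MVT[OF L c df] by blast
  have "l = 0" using z(4) p L by simp
  moreover have "l = \<phi>' z" using DERIV_unique[OF z(3) d] .
  ultimately show ?thesis using z by auto
qed

lemma sq_deriv:
  fixes u :: "real \<Rightarrow> complex"
  assumes "(u has_vector_derivative u') (at x)"
  shows "((\<lambda>s. Re (u s) * Re (u s) + Im (u s) * Im (u s)) has_real_derivative
          2 * (Re (u x) * Re u' + Im (u x) * Im u')) (at x)"
proof -
  have "((\<lambda>s. Re (u s) * Re (u s) + Im (u s) * Im (u s)) has_real_derivative
          (Re u' * Re (u x) + Re u' * Re (u x)) + (Im u' * Im (u x) + Im u' * Im (u x))) (at x)"
    using DERIV_add[OF DERIV_mult[OF Re_deriv[OF assms] Re_deriv[OF assms]]
                       DERIV_mult[OF Im_deriv[OF assms] Im_deriv[OF assms]]] by simp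
  then show ?thesis by (rule DERIV_cong) (simp add: algebra_simps)
qed

lemma dot_deriv:
  fixes u v :: "real \<Rightarrow> complex"
  assumes "(u has_vector_derivative u') (at x)" "(v has_vector_derivative v') (at x)"
  shows "((\<lambda>s. Re (u s) * Re (v s) + Im (u s) * Im (v s)) has_real_derivative
          Re u' * Re (v x) + Re (u x) * Re v' + Im u' * Im (v x) + Im (u x) * Im v') (at x)"
proof -
  have "((\<lambda>s. Re (u s) * Re (v s) + Im (u s) * Im (v s)) has_real_derivative
          (Re u' * Re (v x) + Re v' * Re (u x)) + (Im u' * Im (v x) + Im v' * Im (u x))) (at x)"
    using DERIV_add[OF DERIV_mult[OF Re_deriv[OF assms(1)] Re_deriv[OF assms(2)]]
                       DERIV_mult[OF Im_deriv[OF assms(1)] Im_deriv[OF assms(2)]]] by simp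
  then show ?thesis by (rule DERIV_cong) (simp add: algebra_simps)
qed

context linc begin

lemma A2: "Am (Am z) = (- (a * f - b * c)) *\<^sub>R z"
proof -
  have f: "f = - a" using trace0 by simp
  show ?thesis unfolding f by (simp add: complex_eq_iff algebra_simps)
qed

lemma Y_per: "Y L = Y 0" using per[of 0] by (simp add: Y_def)

lemma det_pos: "a * f - b * c > 0"
proof (rule ccontr)
  assume "\<not> a * f - b * c > 0"
  then have Dn: "- (a * f - b * c) \<ge> 0" by simp
  define lam where "lam = sqrt (- (a * f - b * c))"
  have l2: "lam * lam = - (a * f - b * c)" using Dn by (simp add: lam_def)
  have l0: "lam \<ge> 0" using Dn by (simp add: lam_def)
  have AY: "((\<lambda>t. Am (Y t)) has_vector_derivative \<rho> s *\<^sub>R Am (Am (Y s))) (at s)" for s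
    using amap_deriv[where M="(a, b, c, f)", OF Y_deriv[of s]] by (simp only: amap_scale)
  show False
  proof (cases "lam > 0")
    case True
    define u where "u t = Am (Y t) + lam *\<^sub>R Y t" for t
    have ud: "(u has_vector_derivative (\<rho> s * lam) *\<^sub>R u s) (at s)" for s
    proof -
      have "((\<lambda>x. lam *\<^sub>R Y x) has_vector_derivative lam *\<^sub>R (\<rho> s *\<^sub>R Am (Y s)) + 0 *\<^sub>R Y s) (at s)"
        by (rule has_vector_derivative_scaleR[OF DERIV_const Y_deriv])
      then have "(u has_vector_derivative \<rho> s *\<^sub>R Am (Am (Y s)) + lam *\<^sub>R (\<rho> s *\<^sub>R Am (Y s))) (at s)"
        unfolding u_def[abs_def] by (intro has_vector_derivative_add AY) simp
      moreover have "\<rho> s *\<^sub>R Am (Am (Y s)) + lam *\<^sub>R (\<rho> s *\<^sub>R Am (Y s)) = (\<rho> s * lam) *\<^sub>R u s"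
        unfolding A2 u_def l2[symmetric] by (simp add: scaleR_add_right algebra_simps)
      ultimately show ?thesis by simp
    qed
    define \<phi> where "\<phi> t = Re (u t) * Re (u t) + Im (u t) * Im (u t)" for t
    have \<phi>d: "(\<phi> has_real_derivative 2 * (\<rho> s * lam) * \<phi> s) (at s)" for s
      using sq_deriv[OF ud[of s]] unfolding \<phi>_def[abs_def] by (simp add: algebra_simps)
    have "\<phi> L = \<phi> 0" by (simp add: \<phi>_def u_def Y_per)
    then obtain z where z: "0 < z" "z < L" "2 * (\<rho> z * lam) * \<phi> z = 0"
      using mvt_per[OF Lpos \<phi>d] by blast
    then have "\<phi> z = 0" using \<rho>_pos[of z] True by simp
    then have "u z = 0" unfolding \<phi>_def using sum_squares_eq_zero_iff[of "Re (u z)" "Im (u z)"] by (simp add: complex_eq_iff)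
    then have "Am (Y z) = (- lam) *\<^sub>R Y z" unfolding u_def by (simp add: eq_neg_iff_add_eq_0)
    then have "cross2 (Y z) (Am (Y z)) = 0" by (simp only: cross2_scaleR_right cross2_self mult_zero_right)
    then show False using cross_YAY[of z] \<delta>_pm by simp
  next
    case False
    then have D0: "a * f - b * c = 0" using l0 l2 by simp
    define w where "w t = Am (Y t)" for t
    have wd: "(w has_vector_derivative 0) (at s)" for s
      using AY[of s] unfolding w_def[abs_def] A2 D0 by simp
    define \<phi> where "\<phi> t = Re (Y t) * Re (w t) + Im (Y t) * Im (w t)" for t
    have \<phi>d: "(\<phi> has_real_derivative \<rho> s * (Re (w s) * Re (w s) + Im (w s) * Im (w s))) (at s)" for s
      using dot_deriv[OF Y_deriv[of s] wd[of s]] unfolding \<phi>_def[abs_def] by (simp add: w_def algebra_simps)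
    have "\<phi> L = \<phi> 0" by (simp add: \<phi>_def w_def Y_per)
    then obtain z where z: "0 < z" "z < L" "\<rho> z * (Re (w z) * Re (w z) + Im (w z) * Im (w z)) = 0"
      using mvt_per[OF Lpos \<phi>d] by blast
    then have "Re (w z) * Re (w z) + Im (w z) * Im (w z) = 0" using \<rho>_pos[of z] by simp
    then have "w z = 0" using sum_squares_eq_zero_iff[of "Re (w z)" "Im (w z)"] by (simp add: complex_eq_iff)
    then have "cross2 (Y z) (Am (Y z)) = 0" by (simp add: w_def cross2_def)
    then show False using cross_YAY[of z] \<delta>_pm by simp
  qed
qed

end

context linc begin

lemma fma: "f = - a" using trace0 by simp

lemma cross_sym: "cross2 x (Am y) = cross2 y (Am x)"
  unfolding fma by (simp add: cross2_def algebra_simps)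

definition FF :: "complex \<Rightarrow> real" where "FF z = cross2 z (Am z) + 2 * cross2 z d"

lemma FF_const: "FF (\<gamma> s) = FF (\<gamma> 0)"
proof -
  have "((\<lambda>t. FF (\<gamma> t)) has_real_derivative 0) (at x)" for x
  proof -
    have h1: "((\<lambda>t. cross2 (\<gamma> t) (Am (\<gamma> t))) has_real_derivative
        cross2 (d1 \<gamma> x) (Am (\<gamma> x)) + cross2 (\<gamma> x) (Am (d1 \<gamma> x))) (at x)"
      by (rule cross_deriv_at[OF D1 amap_deriv[OF D1]])
    have h2: "((\<lambda>t. cross2 (\<gamma> t) d) has_real_derivative cross2 (d1 \<gamma> x) d + cross2 (\<gamma> x) 0) (at x)"
      by (rule cross_deriv_at[OF D1 has_vector_derivative_const])
    have "((\<lambda>t. FF (\<gamma> t)) has_real_derivative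
       (cross2 (d1 \<gamma> x) (Am (\<gamma> x)) + cross2 (\<gamma> x) (Am (d1 \<gamma> x))) + 2 * (cross2 (d1 \<gamma> x) d + cross2 (\<gamma> x) 0)) (at x)"
      unfolding FF_def by (intro DERIV_add h1 DERIV_cmult h2)
    moreover have "(cross2 (d1 \<gamma> x) (Am (\<gamma> x)) + cross2 (\<gamma> x) (Am (d1 \<gamma> x))) + 2 * (cross2 (d1 \<gamma> x) d + cross2 (\<gamma> x) 0)
        = 2 * cross2 (d1 \<gamma> x) (Y x)"
      unfolding Y_def cross_sym[of "\<gamma> x"] by (simp add: cross2_add_right cross2_def algebra_simps)
    moreover have "cross2 (d1 \<gamma> x) (Y x) = 0" unfolding d1_eq by (simp add: cross2_scaleR_left)
    ultimately show ?thesis by simp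
  qed
  then show ?thesis using DERIV_isconst_all[of "\<lambda>t. FF (\<gamma> t)"] by blast
qed

definition Dt where "Dt = a * f - b * c"
definition c0 where "c0 = Complex ((- (f * Re d - b * Im d)) / Dt) ((- (- c * Re d + a * Im d)) / Dt)"

lemma Dt_pos: "Dt > 0" using det_pos by (simp add: Dt_def)

lemma Ac0: "Am c0 = - d"
proof -
  have r: "Re c0 * Dt = - (f * Re d - b * Im d)" and i: "Im c0 * Dt = - (- c * Re d + a * Im d)"
    using Dt_pos by (simp_all add: c0_def)
  have "(a * Re c0 + b * Im c0) * Dt = a * (Re c0 * Dt) + b * (Im c0 * Dt)" by (simp add: algebra_simps)
  also have "\<dots> = a * (- (f * Re d - b * Im d)) + b * (- (- c * Re d + a * Im d))" by (simp only: r i)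
  also have "\<dots> = - Re d * Dt" by (simp add: Dt_def algebra_simps)
  finally have "(a * Re c0 + b * Im c0 + Re d) * Dt = 0" by (simp add: algebra_simps)
  then have 1: "a * Re c0 + b * Im c0 = - Re d" using Dt_pos by simp
  have "(c * Re c0 + f * Im c0) * Dt = c * (Re c0 * Dt) + f * (Im c0 * Dt)" by (simp add: algebra_simps)
  also have "\<dots> = c * (- (f * Re d - b * Im d)) + f * (- (- c * Re d + a * Im d))" by (simp only: r i)
  also have "\<dots> = - Im d * Dt" by (simp add: Dt_def algebra_simps)
  finally have "(c * Re c0 + f * Im c0 + Im d) * Dt = 0" by (simp add: algebra_simps)
  then have 2: "c * Re c0 + f * Im c0 = - Im d" using Dt_pos by simp
  show ?thesis using 1 2 by (simp add: complex_eq_iff)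
qed


lemma FF_shift: "FF z = cross2 (z - c0) (Am (z - c0)) + FF c0"
proof -
  define y where "y = z - c0"
  have z: "z = y + c0" by (simp add: y_def)
  have "FF z = cross2 y (Am y) + cross2 y (Am c0) + cross2 c0 (Am y) + cross2 c0 (Am c0)
      + 2 * cross2 y d + 2 * cross2 c0 d"
    unfolding FF_def z amap_add cross2_add_left cross2_add_right by (simp add: algebra_simps)
  also have "cross2 c0 (Am y) = cross2 y (Am c0)" by (rule cross_sym)
  finally have "FF z = cross2 y (Am y) + 2 * cross2 y (Am c0) + cross2 c0 (Am c0) + 2 * cross2 y d + 2 * cross2 c0 d"
    by simp
  also have "\<dots> = cross2 y (Am y) + FF c0"
    unfolding Ac0 FF_def cross2_minus_right by simp
  finally show ?thesis by (simp add: y_def)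
qed

definition Q :: "complex \<Rightarrow> real" where "Q y = cross2 y (Am y)"

lemma Q_expand: "Q y = c * (Re y)^2 - 2 * a * Re y * Im y - b * (Im y)^2"
  unfolding Q_def by (simp add: fma cross2_def algebra_simps power2_eq_square)

lemma cQ: "c * Q y = (c * Re y - a * Im y)^2 + Dt * (Im y)^2"
  unfolding Q_expand Dt_def by (simp add: fma algebra_simps power2_eq_square)

lemma c_nz: "c \<noteq> 0"
proof
  assume "c = 0"
  then have "Dt = - (a * a)" unfolding Dt_def by (simp add: fma)
  then show False using Dt_pos by (smt (verit) zero_le_square)
qed

lemma Q_pos: assumes "y \<noteq> 0" shows "c * Q y > 0"
proof (cases "Im y = 0")
  case True
  then have "Re y \<noteq> 0" using assms by (simp add: complex_eq_iff)
  then have "(c * Re y - a * Im y)^2 > 0" using True c_nz by simp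
  then show ?thesis unfolding cQ using True by simp
next
  case False
  then have "Dt * (Im y)^2 > 0" using Dt_pos by simp
  then show ?thesis unfolding cQ by (smt (verit) zero_le_power2)
qed

lemma conic_final:
  "\<exists>c0 p q r. p > 0 \<and> p * r - q^2 > 0 \<and>
     (\<forall>s. p * (Re (\<gamma> s - c0))^2 + 2 * q * Re (\<gamma> s - c0) * Im (\<gamma> s - c0) + r * (Im (\<gamma> s - c0))^2 = 1)"
proof -
  define m where "m = FF (\<gamma> 0) - FF c0"
  have Qm: "Q (\<gamma> s - c0) = m" for s
    using FF_const[of s] FF_shift[of "\<gamma> s"] FF_shift[of "\<gamma> 0"] unfolding m_def Q_def by simp
  have Q0: "Q 0 = 0" by (simp add: Q_def cross2_def)
  have m0: "m \<noteq> 0"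
  proof
    assume "m = 0"
    have e: "\<gamma> s = c0" for s
    proof (rule ccontr)
      assume "\<gamma> s \<noteq> c0"
      then have "c * Q (\<gamma> s - c0) > 0" using Q_pos by simp
      then show False using Qm[of s] \<open>m = 0\<close> by simp
    qed
    have "\<gamma> 0 \<noteq> \<gamma> (L / 2)" by (rule g_neq) (use Lpos in auto)
    then show False using e by simp
  qed
  have ne: "\<gamma> 0 - c0 \<noteq> 0" using Qm[of 0] m0 Q0 by auto
  have cm: "c * m > 0" using Q_pos[OF ne] Qm[of 0] by simp
  define p where "p = c / m"
  define q where "q = - a / m"
  define r where "r = - b / m"
  have pp: "p > 0" unfolding p_def using cm m0
    by (metis divide_pos_pos divide_neg_neg linorder_neqE_linordered_idom zero_less_mult_iff)
  have "p * r - q^2 = Dt / m^2" unfolding p_def q_def r_def Dt_def using m0 fma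
    by (simp add: field_simps power2_eq_square)
  then have pr: "p * r - q^2 > 0" using Dt_pos m0 by simp
  have "p * (Re (\<gamma> s - c0))^2 + 2 * q * Re (\<gamma> s - c0) * Im (\<gamma> s - c0) + r * (Im (\<gamma> s - c0))^2 = 1" for s
  proof -
    have "p * (Re (\<gamma> s - c0))^2 + 2 * q * Re (\<gamma> s - c0) * Im (\<gamma> s - c0) + r * (Im (\<gamma> s - c0))^2
        = Q (\<gamma> s - c0) / m"
      using m0 unfolding Q_expand p_def q_def r_def by (simp add: field_simps)
    then show ?thesis using Qm[of s] m0 by simp
  qed
  then show ?thesis using pp pr by blast
qed

end

locale ell =
  fixes p q r :: real
  assumes pp: "p > 0" and pr: "p * r - q^2 > 0"
begin

definition sp where "sp = sqrt p"
definition sd where "sd = sqrt ((p * r - q^2) / p)"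

lemma sp_pos: "sp > 0" using pp by (simp add: sp_def)
lemma sd_pos: "sd > 0" using pp pr by (simp add: sd_def)
lemma sp_sq: "sp * sp = p" using pp by (simp add: sp_def)
lemma sd_sq: "sd * sd = (p * r - q^2) / p" using pp pr by (simp add: sd_def)

definition g :: "complex \<Rightarrow> complex" where
  "g z = Complex (sp * Re z + (q / sp) * Im z) (sd * Im z)"
definition fi :: "complex \<Rightarrow> complex" where
  "fi w = Complex ((Re w - (q / sp) * (Im w / sd)) / sp) (Im w / sd)"

lemma g_fi: "g (fi w) = w"
  using sp_pos sd_pos by (simp add: g_def fi_def complex_eq_iff field_simps)

lemma fi_g: "fi (g z) = z"
  using sp_pos sd_pos by (simp add: g_def fi_def complex_eq_iff field_simps)

lemma g_lin: "g (u *\<^sub>R z + v *\<^sub>R w) = u *\<^sub>R g z + v *\<^sub>R g w"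
  by (simp add: g_def complex_eq_iff algebra_simps)

lemma g_scale: "g (u *\<^sub>R z) = u *\<^sub>R g z"
  by (simp add: g_def complex_eq_iff algebra_simps)

lemma g_zero: "g 0 = 0" by (simp add: g_def complex_eq_iff)

lemma fi_linear: "linear fi"
  by (rule linearI) (simp_all add: fi_def complex_eq_iff algebra_simps diff_divide_distrib add_divide_distrib)

lemma fi_inj: "inj fi"
  by (metis g_fi injI)

lemma norm_g: "(norm (g z))^2 = p * (Re z)^2 + 2 * q * Re z * Im z + r * (Im z)^2"
proof -
  have "(norm (g z))^2 = (sp * Re z + (q / sp) * Im z)^2 + (sd * Im z)^2"
    by (simp add: g_def cmod_power2)
  also have "\<dots> = (sp * sp) * (Re z)^2 + 2 * q * Re z * Im z + (q^2 / (sp * sp)) * (Im z)^2 + (sd * sd) * (Im z)^2"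
    using sp_pos by (simp add: power2_eq_square field_simps)
  also have "\<dots> = p * (Re z)^2 + 2 * q * Re z * Im z + r * (Im z)^2"
    unfolding sp_sq sd_sq using pp by (simp add: field_simps power2_eq_square)
  finally show ?thesis .
qed

lemma ellipse_of:
  fixes K :: "complex set" and c0 :: complex
  assumes cK: "convex K" and kK: "compact K" and iK: "interior K \<noteq> {}"
    and fr: "\<And>x. x \<in> frontier K \<Longrightarrow> p * (Re (x - c0))^2 + 2 * q * Re (x - c0) * Im (x - c0) + r * (Im (x - c0))^2 = 1"
  shows "is_ellipse K"
proof -
  define N where "N x = norm (g (x - c0))" for x
  have frN: "N x = 1" if "x \<in> frontier K" for x
  proof -
    have "(N x)^2 = 1" unfolding N_def norm_g using fr[OF that] .
    then have "(N x)^2 = 1^2" by simp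
    then show ?thesis by (rule power2_eq_imp_eq) (simp_all add: N_def)
  qed
  define B where "B = {x. N x \<le> 1}"
  have cB: "convex B" unfolding convex_def B_def
  proof (intro allI ballI impI, clarify)
    fix x y :: complex and u v :: real
    assume xy: "N x \<le> 1" "N y \<le> 1" "0 \<le> u" "0 \<le> v" "u + v = 1"
    have "u *\<^sub>R x + v *\<^sub>R y - c0 = u *\<^sub>R x + v *\<^sub>R y - (u + v) *\<^sub>R c0"
      using xy(5) by simp
    also have "\<dots> = u *\<^sub>R (x - c0) + v *\<^sub>R (y - c0)" by (simp add: algebra_simps)
    finally have "u *\<^sub>R x + v *\<^sub>R y - c0 = u *\<^sub>R (x - c0) + v *\<^sub>R (y - c0)" .
    then have "N (u *\<^sub>R x + v *\<^sub>R y) = norm (u *\<^sub>R g (x - c0) + v *\<^sub>R g (y - c0))"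
      unfolding N_def by (simp add: g_lin)
    also have "\<dots> \<le> u * N x + v * N y" unfolding N_def
      by (rule order_trans[OF norm_triangle_ineq]) (simp add: xy(3,4))
    also have "\<dots> \<le> u * 1 + v * 1" using xy by (intro add_mono mult_left_mono) auto
    finally show "N (u *\<^sub>R x + v *\<^sub>R y) \<le> 1" using xy(5) by simp
  qed
  have KB: "K \<subseteq> B"
  proof -
    have "frontier K \<subseteq> B" using frN by (auto simp: B_def)
    then have "convex hull (frontier K) \<subseteq> B" by (rule hull_minimal) (rule cB)
    then show ?thesis using Krein_Milman_frontier[OF cK kK] by simp
  qed
  obtain z0 where z0: "z0 \<in> interior K" using iK by blast
  then obtain rr where rr: "rr > 0" "ball z0 rr \<subseteq> K" using mem_interior by blast
  have z0K: "z0 \<in> K" using z0 interior_subset by blast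
  have Nz0: "N z0 < 1"
  proof (rule ccontr)
    assume "\<not> N z0 < 1"
    then have N1: "N z0 \<ge> 1" by simp
    have ne: "z0 - c0 \<noteq> 0" using N1 g_zero by (auto simp: N_def)
    define t where "t = rr / (2 * norm (z0 - c0))"
    have t: "t > 0" using rr ne by (simp add: t_def)
    define x where "x = z0 + t *\<^sub>R (z0 - c0)"
    have "dist z0 x = t * norm (z0 - c0)" using t by (simp add: x_def dist_norm)
    also have "\<dots> = rr / 2" using ne by (simp add: t_def)
    finally have "x \<in> ball z0 rr" using rr by simp
    then have xB: "x \<in> B" using rr KB by blast
    have "x - c0 = (1 + t) *\<^sub>R (z0 - c0)" by (simp add: x_def algebra_simps)
    then have Nx: "N x = (1 + t) * N z0" unfolding N_def using t by (simp add: g_scale)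
    have "1 + t \<le> (1 + t) * N z0" using mult_left_mono[OF N1, of "1 + t"] t by simp
    then have "N x > 1" using t Nx by linarith
    then show False using xB by (simp add: B_def)
  qed
  have BK: "B \<subseteq> K"
  proof
    fix x assume xB: "x \<in> B"
    show "x \<in> K"
    proof (rule ccontr)
      assume xK: "x \<notin> K"
      have "closed_segment z0 x \<inter> frontier K \<noteq> {}"
        by (rule connected_Int_frontier[OF connected_segment]) (use z0K xK in auto)
      then obtain y where y: "y \<in> closed_segment z0 x" "y \<in> frontier K" by blast
      then obtain u where u: "0 \<le> u" "u \<le> 1" "y = (1 - u) *\<^sub>R z0 + u *\<^sub>R x" using in_segment(1) by blast
      have Ny: "N y = 1" using frN y(2) .
      show False
      proof (cases "u = 1")
        case True
        then have "y = x" using u by simp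
        then show False using y(2) xK frontier_subset_closed[OF compact_imp_closed[OF kK]] by blast
      next
        case False
        then have u1: "u < 1" using u by simp
        have "y - c0 = (1 - u) *\<^sub>R (z0 - c0) + u *\<^sub>R (x - c0)" using u(3) by (simp add: algebra_simps)
        then have "N y = norm ((1 - u) *\<^sub>R g (z0 - c0) + u *\<^sub>R g (x - c0))"
          unfolding N_def by (simp add: g_lin)
        also have "\<dots> \<le> (1 - u) * N z0 + u * N x" unfolding N_def
          by (rule order_trans[OF norm_triangle_ineq]) (simp add: u(1,2))
        also have "\<dots> < (1 - u) * 1 + u * 1"
        proof (rule add_less_le_mono)
          show "(1 - u) * N z0 < (1 - u) * 1" using u1 Nz0 by simp
          show "u * N x \<le> u * 1" using u(1) xB by (intro mult_left_mono) (auto simp: B_def)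
        qed
        finally show False using Ny by simp
      qed
    qed
  qed
  have KeqB: "K = B" using KB BK by blast
  have "B = (\<lambda>z. c0 + fi z) ` cball 0 1"
  proof
    show "B \<subseteq> (\<lambda>z. c0 + fi z) ` cball 0 1"
    proof
      fix x assume "x \<in> B"
      then have "g (x - c0) \<in> cball 0 1" by (simp add: B_def N_def)
      moreover have "x = c0 + fi (g (x - c0))" by (simp add: fi_g)
      ultimately show "x \<in> (\<lambda>z. c0 + fi z) ` cball 0 1" by blast
    qed
    show "(\<lambda>z. c0 + fi z) ` cball 0 1 \<subseteq> B"
      by (auto simp: B_def N_def g_fi)
  qed
  then show ?thesis unfolding is_ellipse_def using KeqB fi_linear fi_inj by blast
qed

end

theorem theorem4p7:
  fixes K :: "complex set" and \<gamma> :: "real \<Rightarrow> complex" and L :: real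
    and U :: "(complex \<times> complex) set"
  assumes "convex_body K"
    and "C2_regular_boundary_param K \<gamma> L"
    and "U \<subseteq> {(p, q). p \<noteq> q}"
    and "openin (top_of_set (frontier K \<times> frontier K)) U"
    and "\<forall>p\<in>frontier K. \<exists>q. (p, q) \<in> U \<or> (q, p) \<in> U"
    and "\<forall>s t. (\<gamma> s, \<gamma> t) \<in> U \<longrightarrow>
           curvature \<gamma> s \<noteq> 0 \<and> curvature \<gamma> t \<noteq> 0 \<and>
           sin (line_angle (d1 \<gamma> s) (\<gamma> t - \<gamma> s)) ^ 3 / curvature \<gamma> s =
           sin (line_angle (d1 \<gamma> t) (\<gamma> t - \<gamma> s)) ^ 3 / curvature \<gamma> t"
  shows "is_ellipse K"
proof -
  interpret chordc K \<gamma> L U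
    using assms by (unfold_locales) auto
  obtain M d where Md: "\<And>s. T s = amap M (\<gamma> s) + d" using global_lin by blast
  obtain a b c f where M: "M = (a, b, c, f)" by (cases M) auto
  interpret linc K \<gamma> L U a b c f d
    by unfold_locales (use Md M in simp)
  obtain c0 p q r where cpqr: "p > 0" "p * r - q^2 > 0"
    "\<And>s. p * (Re (\<gamma> s - c0))^2 + 2 * q * Re (\<gamma> s - c0) * Im (\<gamma> s - c0) + r * (Im (\<gamma> s - c0))^2 = 1"
    using conic_final by blast
  interpret ell p q r using cpqr by unfold_locales auto
  show ?thesis
  proof (rule ellipse_of[of K c0])
    show "convex K" "compact K" "interior K \<noteq> {}" using assms(1) by (auto simp: convex_body_def)
    fix x assume "x \<in> frontier K"
    then obtain s where "x = \<gamma> s" using frontier_g by blast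
    then show "p * (Re (x - c0))^2 + 2 * q * Re (x - c0) * Im (x - c0) + r * (Im (x - c0))^2 = 1"
      using cpqr(3) by simp
  qed
qed

end
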